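(* Let $G$ be a finite abstract simplicial complex with connection matrix $L$ and $g=L^{-1}$. Then for all $x,y\in G$, $$g(x,y)=\omega(x)\,\omega(y)\,\chi\big(W^+(x)\cap W^+(y)\big).$$
   Context: A finite abstract simplicial complex $G$ is a finite set of non-empty finite sets closed under taking non-empty subsets; its elements are simplices. For $x\in G$, $\omega(x)=(-1)^{|x|-1}$. The connection matrix $L$ has $L(x,y)=1$ if $x\cap y\neq\emptyset$ and $0$ otherwise. The star of $x$ is $W^+(x)=\{y\in G: x\subseteq y\}$. For any subset $A\subseteq G$ (not necessarily a complex), $\chi(A)=\sum_{y\in A}\omega(y)$. *)

theory Defs
  imports Complex_Main
begin

definition simplicial_complex :: "'a set set \<Rightarrow> bool" where
  "simplicial_complex G \<longleftrightarrow> finite G \<and> (\<forall>x\<in>G. x \<noteq> {} \<and> finite x) \<and>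
     (\<forall>x\<in>G. \<forall>y. y \<noteq> {} \<and> y \<subseteq> x \<longrightarrow> y \<in> G)"

definition omega :: "'a set \<Rightarrow> real" where
  "omega x = (-1) ^ (card x - 1)"

definition chi :: "'a set set \<Rightarrow> real" where
  "chi A = (\<Sum>y\<in>A. omega y)"

definition star :: "'a set set \<Rightarrow> 'a set \<Rightarrow> 'a set set" where
  "star G x = {y\<in>G. x \<subseteq> y}"

definition connection :: "'a set \<Rightarrow> 'a set \<Rightarrow> real" where
  "connection x y = (if x \<inter> y \<noteq> {} then 1 else 0)"

text \<open>Matrices indexed by a finite index set I, as functions I \<times> I \<to> real.\<close>
definition is_inverse_on :: "'i set \<Rightarrow> ('i \<Rightarrow> 'i \<Rightarrow> real) \<Rightarrow> ('i \<Rightarrow> 'i \<Rightarrow> real) \<Rightarrow> bool" where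
  "is_inverse_on I A B \<longleftrightarrow>
     (\<forall>x\<in>I. \<forall>y\<in>I. (\<Sum>z\<in>I. A x z * B z y) = (if x = y then 1 else 0)) \<and>
     (\<forall>x\<in>I. \<forall>y\<in>I. (\<Sum>z\<in>I. B x z * A z y) = (if x = y then 1 else 0))"

text \<open>The inverse matrix (entries outside I set to 0 to make it unique).\<close>
definition mat_inv_on :: "'i set \<Rightarrow> ('i \<Rightarrow> 'i \<Rightarrow> real) \<Rightarrow> ('i \<Rightarrow> 'i \<Rightarrow> real)" where
  "mat_inv_on I A = (THE B. is_inverse_on I A B \<and> (\<forall>x y. x \<notin> I \<or> y \<notin> I \<longrightarrow> B x y = 0))"

end

theory Submission
  imports Defs
begin

lemma alt_between:
  assumes "finite S" "U \<subseteq> S"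
  shows "(\<Sum>T | T \<subseteq> S \<and> U \<subseteq> T. (-1::real) ^ card T) = (if U = S then (-1) ^ card S else 0)"
proof (cases "U = S")
  case True
  then have "{T. T \<subseteq> S \<and> U \<subseteq> T} = {S}" by auto
  then show ?thesis using True by simp
next
  case False
  then have "U \<subset> S" using assms by auto
  have fin: "finite {T. T \<subseteq> S \<and> U \<subseteq> T}" using assms(1) by simp
  have "card {T \<in> {T. T \<subseteq> S \<and> U \<subseteq> T}. even (card T)} = card {T \<in> {T. T \<subseteq> S \<and> U \<subseteq> T}. odd (card T)}"
    using card_subsupersets_even_odd[OF assms(1) \<open>U \<subset> S\<close>] by (simp add: conj_assoc)
  from sum_alternating_cancels[OF fin this] False show ?thesis by simp
qed

lemma omega_nonempty: "finite z \<Longrightarrow> z \<noteq> {} \<Longrightarrow> omega z = - ((-1) ^ card z)"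
proof -
  assume "finite z" "z \<noteq> {}"
  then have "card z \<noteq> 0" by simp
  then obtain n where "card z = Suc n" using not0_implies_Suc by blast
  then show ?thesis by (simp add: omega_def)
qed

lemma sum_omega_pow:
  assumes "finite S"
  shows "(\<Sum>z\<in>Pow S - {{}}. omega z) = (if S = {} then 0 else 1)"
proof -
  have "(\<Sum>z\<in>Pow S. (-1::real) ^ card z) = (if S = {} then 1 else 0)"
    using alt_between[OF assms, of "{}"] by (simp add: Pow_def)
  moreover have "(\<Sum>z\<in>Pow S. (-1::real) ^ card z) = 1 + (\<Sum>z\<in>Pow S - {{}}. (-1::real) ^ card z)"
    using assms by (subst sum.remove[of _ "{}"]) auto
  moreover have "(\<Sum>z\<in>Pow S - {{}}. omega z) = - (\<Sum>z\<in>Pow S - {{}}. (-1::real) ^ card z)"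
    by (subst sum_negf[symmetric], rule sum.cong) (auto intro: omega_nonempty finite_subset[OF _ assms])
  ultimately have "(\<Sum>z\<in>Pow S - {{}}. omega z) = 1 - (if S = {} then 1 else 0)"
    by linarith
  then show ?thesis by simp
qed

context
  fixes G :: "'a set set"
  assumes sc: "simplicial_complex G"
begin

lemma finG: "finite G" using sc unfolding simplicial_complex_def by blast
lemma memG: "x \<in> G \<Longrightarrow> x \<noteq> {} \<and> finite x" using sc unfolding simplicial_complex_def by blast
lemma subG: "x \<in> G \<Longrightarrow> y \<noteq> {} \<Longrightarrow> y \<subseteq> x \<Longrightarrow> y \<in> G" using sc unfolding simplicial_complex_def by blast

definition Bf :: "'a set \<Rightarrow> 'a set \<Rightarrow> real" where
  "Bf x y = (if x \<in> G \<and> y \<in> G then omega x * omega y * chi (star G x \<inter> star G y) else 0)"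

lemma chi_eq: "chi (star G z \<inter> star G y) = (\<Sum>w\<in>G. if z \<subseteq> w \<and> y \<subseteq> w then omega w else 0)"
proof -
  have "star G z \<inter> star G y = {w\<in>G. z \<subseteq> w \<and> y \<subseteq> w}" unfolding star_def by auto
  then show ?thesis unfolding chi_def by (simp add: sum.inter_filter[OF finG])
qed

lemma innerC:
  assumes "w \<in> G"
  shows "(\<Sum>z\<in>G. if z \<subseteq> w then connection x z * omega z else 0) = (if w \<subseteq> x then 1 else 0)"
proof -
  have fw: "finite w" using memG[OF assms] by auto
  have e1: "{z\<in>G. z \<subseteq> w} = Pow w - {{}}" using subG[OF assms] memG by auto
  have "(\<Sum>z\<in>G. if z \<subseteq> w then connection x z * omega z else 0) = (\<Sum>z\<in>Pow w - {{}}. connection x z * omega z)"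
    by (simp add: sum.inter_filter[OF finG, symmetric] e1)
  also have "\<dots> = (\<Sum>z\<in>Pow w - {{}}. omega z - (if z \<inter> x = {} then omega z else 0))"
    by (rule sum.cong) (auto simp: connection_def Int_commute)
  also have "\<dots> = (\<Sum>z\<in>Pow w - {{}}. omega z) - (\<Sum>z\<in>Pow (w - x) - {{}}. omega z)"
  proof -
    have "{z \<in> Pow w - {{}}. z \<inter> x = {}} = Pow (w - x) - {{}}" by auto
    then have "(\<Sum>z\<in>Pow w - {{}}. (if z \<inter> x = {} then omega z else 0)) = (\<Sum>z\<in>Pow (w - x) - {{}}. omega z)"
      using fw by (simp add: sum.inter_filter[symmetric])
    then show ?thesis by (simp add: sum_subtractf)
  qed
  also have "\<dots> = (if w \<subseteq> x then 1 else 0)"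
    using fw memG[OF assms] by (simp add: sum_omega_pow)
  finally show ?thesis .
qed

lemma omega_sq: "omega y * omega y = 1"
  unfolding omega_def by (simp flip: power_add)

lemma left_inv:
  assumes x: "x \<in> G" and y: "y \<in> G"
  shows "(\<Sum>z\<in>G. connection x z * Bf z y) = (if x = y then 1 else 0)"
proof -
  have "(\<Sum>z\<in>G. connection x z * Bf z y)
      = (\<Sum>z\<in>G. \<Sum>w\<in>G. if z \<subseteq> w \<and> y \<subseteq> w then omega y * omega w * (connection x z * omega z) else 0)"
  proof (rule sum.cong[OF refl])
    fix z assume z: "z \<in> G"
    have "connection x z * Bf z y = (\<Sum>w\<in>G. connection x z * (omega z * omega y * (if z \<subseteq> w \<and> y \<subseteq> w then omega w else 0)))"
      unfolding Bf_def chi_eq using z y by (simp add: sum_distrib_left)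
    also have "\<dots> = (\<Sum>w\<in>G. if z \<subseteq> w \<and> y \<subseteq> w then omega y * omega w * (connection x z * omega z) else 0)"
      by (intro sum.cong refl) simp
    finally show "connection x z * Bf z y = \<dots>" .
  qed
  also have "\<dots> = (\<Sum>w\<in>G. \<Sum>z\<in>G. if z \<subseteq> w \<and> y \<subseteq> w then omega y * omega w * (connection x z * omega z) else 0)"
    by (rule sum.swap)
  also have "\<dots> = (\<Sum>w\<in>G. if y \<subseteq> w then omega y * omega w * (\<Sum>z\<in>G. if z \<subseteq> w then connection x z * omega z else 0) else 0)"
  proof (rule sum.cong[OF refl])
    fix w assume "w \<in> G"
    show "(\<Sum>z\<in>G. if z \<subseteq> w \<and> y \<subseteq> w then omega y * omega w * (connection x z * omega z) else 0)
      = (if y \<subseteq> w then omega y * omega w * (\<Sum>z\<in>G. if z \<subseteq> w then connection x z * omega z else 0) else 0)"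
    proof (cases "y \<subseteq> w")
      case True
      have "(\<Sum>z\<in>G. if z \<subseteq> w \<and> y \<subseteq> w then omega y * omega w * (connection x z * omega z) else 0)
        = (\<Sum>z\<in>G. omega y * omega w * (if z \<subseteq> w then connection x z * omega z else 0))"
        by (rule sum.cong[OF refl]) (simp add: True)
      then show ?thesis using True by (simp add: sum_distrib_left)
    qed simp
  qed
  also have "\<dots> = (\<Sum>w\<in>G. if y \<subseteq> w \<and> w \<subseteq> x then omega y * omega w else 0)"
    by (intro sum.cong refl) (simp add: innerC)
  also have "\<dots> = (\<Sum>w | w \<subseteq> x \<and> y \<subseteq> w. omega y * omega w)"
  proof -
    have "{w\<in>G. y \<subseteq> w \<and> w \<subseteq> x} = {w. w \<subseteq> x \<and> y \<subseteq> w}"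
    proof (intro set_eqI iffI)
      fix w assume "w \<in> {w. w \<subseteq> x \<and> y \<subseteq> w}"
      then show "w \<in> {w\<in>G. y \<subseteq> w \<and> w \<subseteq> x}" using subG[OF x, of w] memG[OF y] by auto
    qed auto
    then show ?thesis by (simp add: sum.inter_filter[OF finG, symmetric])
  qed
  also have "\<dots> = (if x = y then 1 else 0)"
  proof (cases "y \<subseteq> x")
    case True
    have fx: "finite x" using memG[OF x] by (rule conjunct2)
    have "(\<Sum>w | w \<subseteq> x \<and> y \<subseteq> w. omega y * omega w) = omega y * (\<Sum>w | w \<subseteq> x \<and> y \<subseteq> w. - ((-1) ^ card w))"
    proof -
      have eq: "omega w = - ((-1) ^ card w)" if "w \<in> {w. w \<subseteq> x \<and> y \<subseteq> w}" for w
      proof -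
        have "w \<subseteq> x" "y \<subseteq> w" using that by simp_all
        moreover have "y \<noteq> {}" using memG[OF y] by blast
        ultimately have "finite w" "w \<noteq> {}" using finite_subset[OF _ fx] by blast+
        then show ?thesis by (rule omega_nonempty)
      qed
      show ?thesis unfolding sum_distrib_left by (rule sum.cong[OF refl]) (simp only: eq)
    qed
    also have "\<dots> = (if x = y then 1 else 0)"
    proof (cases "x = y")
      case True
      have "- ((-1) ^ card y) = omega y" using omega_nonempty[of y] memG[OF y] by simp
      then show ?thesis unfolding sum_negf alt_between[OF fx \<open>y \<subseteq> x\<close>] using True omega_sq[of y] by simp
    next
      case False
      then show ?thesis unfolding sum_negf alt_between[OF fx \<open>y \<subseteq> x\<close>] by simp
    qed
    finally show ?thesis .
  next
    case False
    then have "{w. w \<subseteq> x \<and> y \<subseteq> w} = {}" using subset_trans[of y _ x] by fast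
    moreover have "x \<noteq> y" using False by fast
    ultimately show ?thesis by (simp only: sum.empty if_False)
  qed
  finally show ?thesis .
qed

lemma Bf_sym: "Bf x y = Bf y x"
  unfolding Bf_def by (auto simp: Int_commute mult.commute)

lemma conn_sym: "connection x y = connection y x"
  unfolding connection_def by (auto simp: Int_commute)

lemma right_inv:
  assumes x: "x \<in> G" and y: "y \<in> G"
  shows "(\<Sum>z\<in>G. Bf x z * connection z y) = (if x = y then 1 else 0)"
proof -
  have "(\<Sum>z\<in>G. Bf x z * connection z y) = (\<Sum>z\<in>G. connection y z * Bf z x)"
    by (rule sum.cong) (auto simp: Bf_sym conn_sym mult.commute)
  then show ?thesis using left_inv[OF y x] by auto
qed

lemma Bf_inv: "is_inverse_on G connection Bf"
  unfolding is_inverse_on_def using left_inv right_inv by auto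

lemma uniq:
  assumes "is_inverse_on G connection B" "\<forall>x y. x \<notin> G \<or> y \<notin> G \<longrightarrow> B x y = 0"
  shows "B = Bf"
proof (intro ext)
  fix x y
  show "B x y = Bf x y"
  proof (cases "x \<in> G \<and> y \<in> G")
    case False then show ?thesis using assms(2) by (auto simp: Bf_def)
  next
    case True
    have "(\<Sum>z\<in>G. B x z * (if z = y then 1 else 0)) = (\<Sum>z\<in>G. if z = y then B x z else 0)"
      by (rule sum.cong) simp_all
    also have "\<dots> = B x y" using True finG by (simp add: sum.delta')
    finally have "B x y = (\<Sum>z\<in>G. B x z * (if z = y then 1 else 0))" by simp
    also have "\<dots> = (\<Sum>z\<in>G. B x z * (\<Sum>u\<in>G. connection z u * Bf u y))"
      by (rule sum.cong) (auto simp: left_inv True)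
    also have "\<dots> = (\<Sum>u\<in>G. (\<Sum>z\<in>G. B x z * connection z u) * Bf u y)"
    proof -
      have "(\<Sum>z\<in>G. B x z * (\<Sum>u\<in>G. connection z u * Bf u y)) = (\<Sum>z\<in>G. \<Sum>u\<in>G. B x z * connection z u * Bf u y)"
        by (simp add: sum_distrib_left mult.assoc)
      also have "\<dots> = (\<Sum>u\<in>G. \<Sum>z\<in>G. B x z * connection z u * Bf u y)"
        by (rule sum.swap)
      also have "\<dots> = (\<Sum>u\<in>G. (\<Sum>z\<in>G. B x z * connection z u) * Bf u y)"
        by (simp add: sum_distrib_right)
      finally show ?thesis .
    qed
    also have "\<dots> = (\<Sum>u\<in>G. (if x = u then 1 else 0) * Bf u y)"
      using assms(1) True unfolding is_inverse_on_def by (intro sum.cong) auto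
    also have "\<dots> = (\<Sum>u\<in>G. if x = u then Bf u y else 0)"
      by (rule sum.cong) simp_all
    also have "\<dots> = Bf x y" using True finG by (simp add: sum.delta)
    finally show ?thesis .
  qed
qed

lemma mat_inv_eq: "mat_inv_on G connection = Bf"
  unfolding mat_inv_on_def
proof (rule the_equality)
  show "is_inverse_on G connection Bf \<and> (\<forall>x y. x \<notin> G \<or> y \<notin> G \<longrightarrow> Bf x y = 0)"
    using Bf_inv by (auto simp: Bf_def)
qed (use uniq in auto)

end

theorem theorem4:
  fixes G :: "'a set set"
  assumes "simplicial_complex G"
  shows "is_inverse_on G connection (mat_inv_on G connection) \<and>
         (\<forall>x\<in>G. \<forall>y\<in>G. mat_inv_on G connection x y
            = omega x * omega y * chi (star G x \<inter> star G y))"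
  using mat_inv_eq[OF assms] Bf_inv[OF assms] by (auto simp: Bf_def[OF assms])

end
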